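(* Let $h>0$ and let $(\tau,\mu):\mathbb R\to\mathbb R^2$ be any solution of the system $\tau'=1+K(\tau,\mu)\mu$, $\mu'=-K(\tau,\mu)\tau$. Then there is a compact interval $[A,B]\subset\mathbb R$ such that $\mu\neq0$ outside $[A,B]$ and the function $\nu=-\tau/\mu$ is bounded on $\mathbb R\setminus[A,B]$.
   Context: Fix $h>0$. For $(\tau,\mu)\in\mathbb R^2$ put $r^2=\tau^2+\mu^2$ and define $K:\mathbb R^2\to\mathbb R$ by $$K(\tau,\mu)=\frac{2\big(\tau^2+h^2(1+\mu^2)\big)\tau+(h^2-1)(1+\mu^2)\mu}{(1+r^2)(h^2+r^2)}.$$ Consider the autonomous ODE system $\tau'=1+K(\tau,\mu)\mu$, $\mu'=-K(\tau,\mu)\tau$ for functions $s\mapsto(\tau(s),\mu(s))$; all its solutions are defined on $\mathbb R$. *)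

theory Defs
  imports "HOL-Analysis.Analysis"
begin

definition K :: "real \<Rightarrow> real \<Rightarrow> real \<Rightarrow> real" where
  "K h \<tau> \<mu> =
     (2 * (\<tau>\<^sup>2 + h\<^sup>2 * (1 + \<mu>\<^sup>2)) * \<tau> + (h\<^sup>2 - 1) * (1 + \<mu>\<^sup>2) * \<mu>) /
     ((1 + (\<tau>\<^sup>2 + \<mu>\<^sup>2)) * (h\<^sup>2 + (\<tau>\<^sup>2 + \<mu>\<^sup>2)))"

end

theory Submission
  imports Defs
begin


definition DD :: "real \<Rightarrow> real \<Rightarrow> real \<Rightarrow> real" where
  "DD h t m = (1 + (t\<^sup>2 + m\<^sup>2)) * (h\<^sup>2 + (t\<^sup>2 + m\<^sup>2))"
definition NN :: "real \<Rightarrow> real \<Rightarrow> real \<Rightarrow> real" where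
  "NN h t m = 2 * (t\<^sup>2 + h\<^sup>2 * (1 + m\<^sup>2)) * t + (h\<^sup>2 - 1) * (1 + m\<^sup>2) * m"

lemma DD_pos: "h > 0 \<Longrightarrow> DD h t m > 0"
  unfolding DD_def by (intro mult_pos_pos) (auto intro: add_pos_nonneg)

lemma DD_ge: "h > 0 \<Longrightarrow> DD h t m \<ge> h\<^sup>2"
proof -
  assume "h > 0"
  have "(1 + (t\<^sup>2 + m\<^sup>2)) * (h\<^sup>2 + (t\<^sup>2 + m\<^sup>2)) \<ge> 1 * h\<^sup>2"
    by (intro mult_mono) auto
  thus ?thesis unfolding DD_def by simp
qed

lemma K_eq: "K h t m = NN h t m / DD h t m"
  unfolding K_def NN_def DD_def by simp

lemma num_id: assumes "h > 0"
  shows "(m + K h t m * (t\<^sup>2 + m\<^sup>2)) * DD h t m =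
     (t\<^sup>2 + m\<^sup>2) * (2*t+m) * (t\<^sup>2 + h\<^sup>2*m\<^sup>2) + 2*h\<^sup>2*(t\<^sup>2+m\<^sup>2)*(t+m) + h\<^sup>2*m"
proof -
  have "DD h t m \<noteq> 0" using DD_pos[OF assms, of t m] by simp
  hence "(m + K h t m * (t\<^sup>2 + m\<^sup>2)) * DD h t m = m * DD h t m + NN h t m * (t\<^sup>2 + m\<^sup>2)"
    unfolding K_eq by (simp add: field_simps)
  also have "\<dots> = (t\<^sup>2 + m\<^sup>2) * (2*t+m) * (t\<^sup>2 + h\<^sup>2*m\<^sup>2) + 2*h\<^sup>2*(t\<^sup>2+m\<^sup>2)*(t+m) + h\<^sup>2*m"
    unfolding DD_def NN_def by (simp add: algebra_simps power2_eq_square)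
  finally show ?thesis .
qed

lemma K_neg: "K h (-t) (-m) = - K h t m"
proof -
  have "NN h (-t) (-m) = - NN h t m" "DD h (-t) (-m) = DD h t m"
    unfolding NN_def DD_def by (simp_all add: algebra_simps)
  thus ?thesis unfolding K_eq by simp
qed

lemma K_m0: assumes "K h t 0 * t = 0" "h > 0" shows "t = 0"
proof (rule ccontr)
  assume "t \<noteq> 0"
  have "NN h t 0 * t = 2 * (t\<^sup>2 + h\<^sup>2) * t\<^sup>2" unfolding NN_def by (simp add: power2_eq_square)
  also have "\<dots> > 0" using \<open>t \<noteq> 0\<close> assms(2) by (intro mult_pos_pos) (auto intro: add_pos_nonneg)
  finally have "NN h t 0 * t / DD h t 0 > 0" using DD_pos[OF assms(2), of t 0] by simp
  moreover have "K h t 0 * t = NN h t 0 * t / DD h t 0" by (simp add: K_eq)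
  ultimately show False using assms(1) by simp
qed



lemma negNNt: "-(NN h t m * t) \<le> \<bar>h\<^sup>2 - 1\<bar> * (1 + m\<^sup>2) * \<bar>m\<bar> * \<bar>t\<bar>"
proof -
  have a0: "0 \<le> 2 * (t\<^sup>2 + h\<^sup>2 * (1 + m\<^sup>2)) * (t * t)" by simp
  hence a: "2 * (t\<^sup>2 + h\<^sup>2 * (1 + m\<^sup>2)) * t * t \<ge> 0" by (simp add: mult.assoc)
  have b: "-((h\<^sup>2 - 1) * (1 + m\<^sup>2) * m * t) \<le> \<bar>(h\<^sup>2 - 1) * (1 + m\<^sup>2) * m * t\<bar>" by linarith
  have c: "\<bar>(h\<^sup>2 - 1) * (1 + m\<^sup>2) * m * t\<bar> = \<bar>h\<^sup>2 - 1\<bar> * (1 + m\<^sup>2) * \<bar>m\<bar> * \<bar>t\<bar>"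
    by (simp add: abs_mult)
  have "NN h t m * t = 2 * (t\<^sup>2 + h\<^sup>2 * (1 + m\<^sup>2)) * t * t + (h\<^sup>2 - 1) * (1 + m\<^sup>2) * m * t"
    unfolding NN_def by (simp add: algebra_simps)
  thus ?thesis using a b c by linarith
qed

lemma DD_ge2: "(1 + m\<^sup>2) * (h\<^sup>2 + t\<^sup>2) \<le> DD h t m"
  unfolding DD_def by (intro mult_mono) auto

lemma grow1: assumes "h > 0" shows "- (K h t m * t) \<le> \<bar>h\<^sup>2 - 1\<bar> / (2*h) * \<bar>m\<bar>"
proof -
  let ?c = "\<bar>h\<^sup>2 - 1\<bar>"
  have s2: "2*h*\<bar>t\<bar> \<le> h\<^sup>2 + t\<^sup>2"
  proof -
    have "0 \<le> (h - \<bar>t\<bar>)\<^sup>2" by simp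
    thus ?thesis by (simp add: power2_eq_square algebra_simps)
  qed
  have "(?c * (1 + m\<^sup>2) * \<bar>m\<bar>) * (2*h*\<bar>t\<bar>) \<le> (?c * (1 + m\<^sup>2) * \<bar>m\<bar>) * (h\<^sup>2 + t\<^sup>2)"
    by (rule mult_left_mono[OF s2]) simp
  also have "\<dots> = (?c * \<bar>m\<bar>) * ((1 + m\<^sup>2) * (h\<^sup>2 + t\<^sup>2))" by simp
  also have "\<dots> \<le> (?c * \<bar>m\<bar>) * DD h t m" by (rule mult_left_mono[OF DD_ge2]) simp
  finally have "-(NN h t m * t) * (2*h) \<le> (?c * \<bar>m\<bar>) * DD h t m"
    using negNNt[of h t m] assms by (smt (verit) mult_right_mono mult.commute mult.left_commute mult.assoc)
  hence "-(NN h t m * t) / DD h t m \<le> ?c * \<bar>m\<bar> / (2*h)"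
    using DD_pos[OF assms, of t m] assms by (simp add: field_simps)
  moreover have "- (K h t m * t) = -(NN h t m * t) / DD h t m" by (simp add: K_eq)
  ultimately show ?thesis by simp
qed

lemma grow2: assumes "h > 0" shows "- (K h t m * t) \<le> \<bar>h\<^sup>2 - 1\<bar> / 2"
proof -
  let ?c = "\<bar>h\<^sup>2 - 1\<bar>"
  have s2: "2*(\<bar>m\<bar>*\<bar>t\<bar>) \<le> h\<^sup>2 + (t\<^sup>2 + m\<^sup>2)"
  proof -
    have "0 \<le> (\<bar>m\<bar> - \<bar>t\<bar>)\<^sup>2" by simp
    hence "2*(\<bar>m\<bar>*\<bar>t\<bar>) \<le> t\<^sup>2 + m\<^sup>2" by (simp add: power2_eq_square algebra_simps)
    thus ?thesis using zero_le_power2[of h] by linarith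
  qed
  have s3: "1 + m\<^sup>2 \<le> 1 + (t\<^sup>2 + m\<^sup>2)" by simp
  have "?c * (1 + m\<^sup>2) * \<bar>m\<bar> * \<bar>t\<bar> * 2 = ?c * ((1 + m\<^sup>2) * (2*(\<bar>m\<bar>*\<bar>t\<bar>)))" by simp
  also have "\<dots> \<le> ?c * ((1 + (t\<^sup>2 + m\<^sup>2)) * (h\<^sup>2 + (t\<^sup>2 + m\<^sup>2)))"
    by (intro mult_left_mono mult_mono s2 s3) auto
  also have "\<dots> = ?c * DD h t m" unfolding DD_def ..
  finally have "-(NN h t m * t) * 2 \<le> ?c * DD h t m" using negNNt[of h t m] by linarith
  hence "-(NN h t m * t) / DD h t m \<le> ?c / 2"
    using DD_pos[OF assms, of t m] assms by (simp add: field_simps)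
  moreover have "- (K h t m * t) = -(NN h t m * t) / DD h t m" by (simp add: K_eq)
  ultimately show ?thesis by simp
qed



abbreviation PP :: "real \<Rightarrow> real \<Rightarrow> real \<Rightarrow> real" where
  "PP h t m \<equiv> (t\<^sup>2 + m\<^sup>2) * (2*t+m) * (t\<^sup>2 + h\<^sup>2*m\<^sup>2) + 2*h\<^sup>2*(t\<^sup>2+m\<^sup>2)*(t+m) + h\<^sup>2*m"

lemma sign_from_PP:
  assumes "h > 0"
  shows "m + K h t m * (t\<^sup>2 + m\<^sup>2) = PP h t m / DD h t m"
  using num_id[OF assms, of m t] DD_pos[OF assms, of t m] by (simp add: field_simps)

lemma A3: assumes "h > 0" "m < 0" "2*t + m \<le> 0"
  shows "m + K h t m * (t\<^sup>2 + m\<^sup>2) < 0"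
proof -
  have 1: "(t\<^sup>2 + m\<^sup>2) * (2*t+m) * (t\<^sup>2 + h\<^sup>2*m\<^sup>2) \<le> 0"
  proof -
    have "(t\<^sup>2 + m\<^sup>2) * (2*t+m) \<le> 0" using assms by (simp add: mult_nonneg_nonpos)
    thus ?thesis by (simp add: mult_nonpos_nonneg)
  qed
  have 2: "2*h\<^sup>2*(t\<^sup>2+m\<^sup>2)*(t+m) \<le> 0" using assms by (intro mult_nonneg_nonpos) auto
  have 3: "h\<^sup>2*m < 0" using assms by (simp add: mult_pos_neg)
  have "PP h t m < 0" using 1 2 3 by linarith
  thus ?thesis using sign_from_PP[OF assms(1)] DD_pos[OF assms(1), of t m] by (simp add: divide_neg_pos)
qed

lemma A4: assumes "h > 0" "m0 > 0" "m \<le> -m0" "b \<ge> 1" "b * m0 \<ge> 1 + h" "t \<ge> -b*m"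
  shows "m + K h t m * (t\<^sup>2 + m\<^sup>2) > 0"
proof -
  have "b*m0 \<le> b*(-m)" using assms by (intro mult_left_mono) auto
  hence bm: "b*m0 \<le> -b*m" by simp
  hence t1: "t \<ge> 1 + h" using assms by linarith
  have "-b*m \<ge> -m" using assms by (simp add: mult_right_mono)
  hence tm: "t + m \<ge> 0" "2*t + m \<ge> -m" using assms by linarith+
  have tsq: "t\<^sup>2 > h"
  proof -
    have "(1+h)\<^sup>2 \<le> t\<^sup>2" using t1 assms(1) by (intro power_mono) auto
    moreover have "(1+h)\<^sup>2 > h" using assms(1) by (simp add: power2_eq_square algebra_simps)
          (smt (verit) mult_pos_pos)
    ultimately show ?thesis by linarith
  qed
  have t4: "t\<^sup>2 * t\<^sup>2 > h\<^sup>2"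
  proof -
    have "h * h < t\<^sup>2 * t\<^sup>2" using tsq assms(1) by (intro mult_strict_mono) auto
    thus ?thesis by (simp add: power2_eq_square)
  qed
  have 1: "(t\<^sup>2 + m\<^sup>2) * (2*t+m) * (t\<^sup>2 + h\<^sup>2*m\<^sup>2) \<ge> (t\<^sup>2) * (-m) * (t\<^sup>2)"
    using tm assms by (intro mult_mono) auto
  have 2: "2*h\<^sup>2*(t\<^sup>2+m\<^sup>2)*(t+m) \<ge> 0" using tm by simp
  have "(-m) * (t\<^sup>2 * t\<^sup>2) > (-m) * h\<^sup>2" using t4 assms by (intro mult_strict_left_mono) auto
  hence "PP h t m > 0" using 1 2 by (simp add: algebra_simps)
  thus ?thesis using sign_from_PP[OF assms(1)] DD_pos[OF assms(1), of t m] by simp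
qed

lemma A5: assumes "h > 0" "m > 0" "\<delta> > 0" "2*t + m \<ge> \<delta> * m"
  shows "m + K h t m * (t\<^sup>2 + m\<^sup>2) \<ge> min (\<delta> * min 1 (h\<^sup>2)) (h\<^sup>2/(1+h\<^sup>2)) * m"
proof -
  define r where "r = t\<^sup>2 + m\<^sup>2"
  define c where "c = min 1 (h\<^sup>2)"
  define g where "g = min (\<delta> * c) (h\<^sup>2/(1+h\<^sup>2))"
  have r0: "r \<ge> 0" unfolding r_def by simp
  have c1: "c \<le> 1" "c \<le> h\<^sup>2" "c \<ge> 0" unfolding c_def by auto
  have mh: "t\<^sup>2 + h\<^sup>2*m\<^sup>2 \<ge> c * r"
  proof -
    have "c * t\<^sup>2 \<le> 1 * t\<^sup>2" using c1 by (intro mult_right_mono) auto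
    moreover have "c * m\<^sup>2 \<le> h\<^sup>2 * m\<^sup>2" using c1 by (intro mult_right_mono) auto
    ultimately show ?thesis unfolding r_def by (simp add: algebra_simps)
  qed
  have "\<delta> * m > 0" using assms by simp
  hence tm: "t + m \<ge> m/2" "2*t+m \<ge> 0" using assms by linarith+
  have 1: "(t\<^sup>2 + m\<^sup>2) * (2*t+m) * (t\<^sup>2 + h\<^sup>2*m\<^sup>2) \<ge> r * (\<delta>*m) * (c * r)"
    unfolding r_def[symmetric] using assms mh r0 c1 tm by (intro mult_mono) auto
  have 2: "2*h\<^sup>2*(t\<^sup>2+m\<^sup>2)*(t+m) \<ge> 2*h\<^sup>2*r*(m/2)"
    unfolding r_def[symmetric] using tm r0 by (intro mult_left_mono) auto
  have "PP h t m \<ge> r * (\<delta>*m) * (c * r) + 2*h\<^sup>2*r*(m/2) + h\<^sup>2*m"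
    using 1 2 unfolding r_def by linarith
  also have "r * (\<delta>*m) * (c * r) + 2*h\<^sup>2*r*(m/2) + h\<^sup>2*m = m * ((\<delta> * c) * (r*r) + h\<^sup>2 * r + h\<^sup>2)"
    by (simp add: algebra_simps)
  finally have P1: "PP h t m \<ge> m * ((\<delta> * c) * (r*r) + h\<^sup>2 * r + h\<^sup>2)" .
  have g1: "g \<le> \<delta> * c" "g \<le> h\<^sup>2/(1+h\<^sup>2)" unfolding g_def by auto
  have "1+h\<^sup>2 > 0" by (simp add: add_pos_nonneg)
  hence hh: "h\<^sup>2/(1+h\<^sup>2) * (1+h\<^sup>2) = h\<^sup>2" by simp
  have hh1: "h\<^sup>2/(1+h\<^sup>2) \<le> 1" using \<open>1+h\<^sup>2 > 0\<close> by (simp add: divide_le_eq)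
  have "(\<delta> * c) * (r*r) + h\<^sup>2 * r + h\<^sup>2 \<ge> g * (r*r + (1+h\<^sup>2)*r + h\<^sup>2)"
  proof -
    have a: "g * (r*r) \<le> (\<delta> * c) * (r*r)" using g1 by (intro mult_right_mono) auto
    have "g * (1+h\<^sup>2) \<le> h\<^sup>2/(1+h\<^sup>2) * (1+h\<^sup>2)" using g1 by (intro mult_right_mono) auto
    hence "g * (1+h\<^sup>2) \<le> h\<^sup>2" using hh by simp
    hence b: "(g * (1+h\<^sup>2))*r \<le> h\<^sup>2 * r" using r0 by (intro mult_right_mono) auto
    have "g * h\<^sup>2 \<le> 1 * h\<^sup>2" using g1 hh1 by (intro mult_right_mono) auto
    thus ?thesis using a b by (simp add: algebra_simps)
  qed
  moreover have "DD h t m = r*r + (1+h\<^sup>2)*r + h\<^sup>2" unfolding DD_def r_def by (simp add: algebra_simps)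
  ultimately have "m * (g * DD h t m) \<le> m * ((\<delta> * c) * (r*r) + h\<^sup>2 * r + h\<^sup>2)"
    using assms(2) by (intro mult_left_mono) auto
  hence "PP h t m \<ge> m * (g * DD h t m)" using P1 by linarith
  hence "PP h t m / DD h t m \<ge> g * m" using DD_pos[OF assms(1), of t m] by (simp add: field_simps)
  thus ?thesis using sign_from_PP[OF assms(1)] unfolding g_def c_def by simp
qed



lemma NN_split: "NN h t m = 2*t^3 + (1+m\<^sup>2)*(2*h\<^sup>2*t + (h\<^sup>2-1)*m)"
  unfolding NN_def by (simp add: algebra_simps power2_eq_square power3_eq_cube)

lemma A6: assumes "h > 0" "m < 0" "a > 0" "2*h\<^sup>2*a > h\<^sup>2 - 1" "t \<ge> -a*m"
  shows "K h t m * t > 0"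
proof -
  define q where "q = -m"
  have q0: "q > 0" using assms unfolding q_def by simp
  have tq: "t \<ge> a*q" using assms unfolding q_def by simp
  hence t0: "t > 0" using q0 assms by (smt (verit) mult_pos_pos)
  have "2*h\<^sup>2*t \<ge> 2*h\<^sup>2*(a*q)" using tq by (intro mult_left_mono) auto
  moreover have "(2*h\<^sup>2*a - (h\<^sup>2-1))*q > 0" using q0 assms by simp
  moreover have "2*h\<^sup>2*(a*q) - (h\<^sup>2-1)*q = (2*h\<^sup>2*a - (h\<^sup>2-1))*q" by (simp add: algebra_simps)
  moreover have "(h\<^sup>2-1)*m = -((h\<^sup>2-1)*q)" unfolding q_def by simp
  ultimately have "2*h\<^sup>2*t + (h\<^sup>2-1)*m > 0" by linarith
  hence "(1+m\<^sup>2)*(2*h\<^sup>2*t + (h\<^sup>2-1)*m) > 0" by (simp add: add_pos_nonneg)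
  moreover have "2*t^3 > 0" using t0 by simp
  ultimately have "NN h t m > 0" unfolding NN_split by linarith
  hence "NN h t m * t / DD h t m > 0" using t0 DD_pos[OF assms(1), of t m] by simp
  thus ?thesis by (simp add: K_eq)
qed

lemma A7: assumes "h > 0" "t\<^sup>2 + m\<^sup>2 \<le> \<rho>" "\<rho> \<le> 1" "(2 + 4*h\<^sup>2 + 2*\<bar>h\<^sup>2-1\<bar>)*\<rho> \<le> h\<^sup>2/2"
  shows "1 + K h t m * m \<ge> 1/2"
proof -
  define R where "R = t\<^sup>2 + m\<^sup>2"
  have t1: "t\<^sup>2 \<le> 1" "m\<^sup>2 \<le> 1" using assms(2,3) zero_le_power2[of t] zero_le_power2[of m] by linarith+
  have t1': "m\<^sup>2 \<le> R" unfolding R_def by simp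
  have tm: "2*(\<bar>t\<bar>*\<bar>m\<bar>) \<le> R"
  proof -
    have "0 \<le> (\<bar>t\<bar> - \<bar>m\<bar>)\<^sup>2" by simp
    thus ?thesis unfolding R_def by (simp add: power2_eq_square algebra_simps)
  qed
  have b1: "t\<^sup>2+h\<^sup>2*(1+m\<^sup>2) \<le> 1 + 2*h\<^sup>2"
  proof -
    have "h\<^sup>2*(1+m\<^sup>2) \<le> h\<^sup>2*2" using t1 by (intro mult_left_mono) auto
    thus ?thesis using t1 by linarith
  qed
  have X1: "-(2*(t\<^sup>2+h\<^sup>2*(1+m\<^sup>2))*(t*m)) \<le> (1+2*h\<^sup>2)*R"
  proof -
    have "-(2*(t\<^sup>2+h\<^sup>2*(1+m\<^sup>2))*(t*m)) \<le> (t\<^sup>2+h\<^sup>2*(1+m\<^sup>2)) * (2*(\<bar>t\<bar>*\<bar>m\<bar>))"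
    proof -
      have "-(t*m) \<le> \<bar>t\<bar>*\<bar>m\<bar>" by (simp add: abs_mult[symmetric])
      hence "(t\<^sup>2+h\<^sup>2*(1+m\<^sup>2)) * (-(t*m)) \<le> (t\<^sup>2+h\<^sup>2*(1+m\<^sup>2)) * (\<bar>t\<bar>*\<bar>m\<bar>)"
        by (intro mult_left_mono) auto
      thus ?thesis by (simp add: algebra_simps)
    qed
    also have "\<dots> \<le> (1+2*h\<^sup>2)*R" using b1 tm by (intro mult_mono) auto
    finally show ?thesis .
  qed
  have X2: "-((h\<^sup>2-1)*(1+m\<^sup>2)*m\<^sup>2) \<le> \<bar>h\<^sup>2-1\<bar>*(2*R)"
  proof -
    have "-((h\<^sup>2-1)*(1+m\<^sup>2)*m\<^sup>2) \<le> \<bar>h\<^sup>2-1\<bar>*((1+m\<^sup>2)*m\<^sup>2)"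
      by (smt (verit, best) abs_ge_self abs_minus_cancel minus_mult_left mult.assoc mult_right_mono zero_le_mult_iff zero_le_power2 add_nonneg_nonneg zero_le_one)
    also have "\<dots> \<le> \<bar>h\<^sup>2-1\<bar>*(2*R)" using t1 t1' by (intro mult_left_mono mult_mono) auto
    finally show ?thesis .
  qed
  have "NN h t m * m = 2*(t\<^sup>2+h\<^sup>2*(1+m\<^sup>2))*(t*m) + (h\<^sup>2-1)*(1+m\<^sup>2)*m\<^sup>2"
    unfolding NN_def by (simp add: algebra_simps power2_eq_square)
  hence "-(NN h t m * m) \<le> (1+2*h\<^sup>2)*R + \<bar>h\<^sup>2-1\<bar>*(2*R)" using X1 X2 by linarith
  also have "\<dots> \<le> (2 + 4*h\<^sup>2 + 2*\<bar>h\<^sup>2-1\<bar>)*R" using t1 t1' unfolding R_def by (simp add: algebra_simps)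
  also have "\<dots> \<le> (2 + 4*h\<^sup>2 + 2*\<bar>h\<^sup>2-1\<bar>)*\<rho>" using assms unfolding R_def by (intro mult_left_mono) auto
  also have "\<dots> \<le> DD h t m / 2" using assms(4) DD_ge[OF assms(1), of t m] by linarith
  finally have "-(NN h t m * m) / DD h t m \<le> 1/2" using DD_pos[OF assms(1), of t m] by (simp add: field_simps)
  moreover have "-(K h t m * m) = -(NN h t m * m) / DD h t m" by (simp add: K_eq)
  ultimately show ?thesis by linarith
qed

lemma A8: assumes "h > 0" "m \<ge> 0" "t \<ge> lam*m" "lam \<ge> 1" "h\<^sup>2*lam \<ge> \<bar>h\<^sup>2-1\<bar>" "t \<ge> 1"
  shows "K h t m \<ge> 0" "K h t m * t \<ge> 2/(3*(h\<^sup>2+2))"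
proof -
  have f1: "h\<^sup>2*(lam*m) \<le> h\<^sup>2*t" using assms by (intro mult_left_mono) auto
  have f2: "\<bar>h\<^sup>2-1\<bar>*m \<le> (h\<^sup>2*lam)*m" using assms by (intro mult_right_mono) auto
  have e: "(h\<^sup>2*lam)*m = h\<^sup>2*(lam*m)" by simp
  have f3: "-((h\<^sup>2-1)*m) \<le> \<bar>h\<^sup>2-1\<bar>*m" using assms(2)
    by (smt (verit) abs_ge_self abs_minus_cancel mult_right_mono minus_mult_left)
  have f4: "0 \<le> \<bar>h\<^sup>2-1\<bar>*m" using assms(2) by simp
  have "0 \<le> 2*(h\<^sup>2*t) + (h\<^sup>2-1)*m" using f1 f2 e f3 f4 by linarith
  hence "2*h\<^sup>2*t + (h\<^sup>2-1)*m \<ge> 0" by (simp add: mult.assoc)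
  hence "(1+m\<^sup>2)*(2*h\<^sup>2*t + (h\<^sup>2-1)*m) \<ge> 0" by simp
  hence NN1: "NN h t m \<ge> 2*t^3" unfolding NN_split by linarith
  have t0: "t > 0" using assms by simp
  have "2*t^3 > 0" using t0 by simp
  hence NN0: "NN h t m \<ge> 0" using NN1 by linarith
  show "K h t m \<ge> 0" unfolding K_eq using NN0 DD_pos[OF assms(1), of t m] by simp
  have "1*m \<le> lam*m" using assms by (intro mult_right_mono) auto
  hence mt: "m \<le> t" using assms by linarith
  have m2: "m\<^sup>2 \<le> t\<^sup>2" using mt assms by (intro power_mono) auto
  have t2: "1 \<le> t\<^sup>2" using assms by (simp add: one_le_power)
  have d1: "1 + (t\<^sup>2+m\<^sup>2) \<le> 3*t\<^sup>2" using m2 t2 by linarith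
  have "h\<^sup>2 * 1 \<le> h\<^sup>2 * t\<^sup>2" using t2 by (intro mult_left_mono) auto
  hence d2: "h\<^sup>2 + (t\<^sup>2+m\<^sup>2) \<le> (h\<^sup>2+2)*t\<^sup>2" using m2 by (simp add: algebra_simps)
  have DDle: "DD h t m \<le> (3*t\<^sup>2)*((h\<^sup>2+2)*t\<^sup>2)" unfolding DD_def
    using d1 d2 by (intro mult_mono) (auto intro: add_nonneg_nonneg)
  have "NN h t m * t \<ge> 2*t^3*t" using NN1 t0 by (intro mult_right_mono) auto
  hence NNt: "NN h t m * t \<ge> 2*(t\<^sup>2*t\<^sup>2)" by (simp add: power2_eq_square power3_eq_cube)
  have pos: "t\<^sup>2*t\<^sup>2 > 0" using t0 by simp
  have eq: "(3*t\<^sup>2)*((h\<^sup>2+2)*t\<^sup>2) = (3*(h\<^sup>2+2))*(t\<^sup>2*t\<^sup>2)" by (simp add: algebra_simps)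
  have "2*(t\<^sup>2*t\<^sup>2) / ((3*(h\<^sup>2+2))*(t\<^sup>2*t\<^sup>2)) = 2/(3*(h\<^sup>2+2))" using pos by simp
  hence "2/(3*(h\<^sup>2+2)) = 2*(t\<^sup>2*t\<^sup>2) / ((3*t\<^sup>2)*((h\<^sup>2+2)*t\<^sup>2))" using eq by simp
  also have "\<dots> \<le> 2*(t\<^sup>2*t\<^sup>2) / DD h t m"
  proof (rule divide_left_mono)
    have "0 < (3*t\<^sup>2)*((h\<^sup>2+2)*t\<^sup>2)" using t0 by (intro mult_pos_pos) (auto intro: add_nonneg_pos)
    thus "0 < (3*t\<^sup>2)*((h\<^sup>2+2)*t\<^sup>2) * DD h t m" using DD_pos[OF assms(1), of t m] by simp
  qed (use DDle in auto)
  also have "\<dots> \<le> NN h t m * t / DD h t m"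
    using NNt DD_pos[OF assms(1), of t m] by (intro divide_right_mono) auto
  finally show "K h t m * t \<ge> 2/(3*(h\<^sup>2+2))" by (simp add: K_eq)
qed



lemma last_cross:
  fixes f :: "real \<Rightarrow> real"
  assumes cont: "continuous_on {a..b} f" and ab: "a \<le> b" and fa: "c \<le> f a" and fb: "f b < c"
  shows "\<exists>t0. a \<le> t0 \<and> t0 < b \<and> f t0 = c \<and> (\<forall>t. t0 < t \<and> t \<le> b \<longrightarrow> f t < c)"
proof -
  define S where "S = {a..b} \<inter> f -` {c..}"
  have clS: "closed S" unfolding S_def by (rule continuous_closed_preimage[OF cont]) auto
  have aS: "a \<in> S" unfolding S_def using ab fa by auto
  have bdd: "bdd_above S" unfolding S_def by (rule bdd_aboveI[of _ b]) auto
  define t0 where "t0 = Sup S"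
  have t0S: "t0 \<in> S" unfolding t0_def using closed_contains_Sup[OF _ bdd clS] aS by blast
  have at0: "a \<le> t0" unfolding t0_def using cSup_upper[OF aS bdd] .
  have t0b: "t0 \<le> b" "c \<le> f t0" using t0S unfolding S_def by auto
  have t0b': "t0 < b" using t0b fb by (cases "t0 = b") auto
  have after: "\<forall>t. t0 < t \<and> t \<le> b \<longrightarrow> f t < c"
  proof (intro allI impI)
    fix t assume t: "t0 < t \<and> t \<le> b"
    show "f t < c"
    proof (rule ccontr)
      assume "\<not> f t < c"
      hence "t \<in> S" unfolding S_def using t at0 by auto
      hence "t \<le> t0" unfolding t0_def using cSup_upper[OF _ bdd] by blast
      thus False using t by simp
    qed
  qed
  have cont2: "continuous_on {t0..b} f" using cont at0 by (auto intro: continuous_on_subset)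
  obtain x where x: "t0 \<le> x" "x \<le> b" "f x = c"
    using IVT2'[of f b c t0, OF _ _ _ cont2] fb t0b t0b' by auto
  have "x = t0" using x after by (metis less_irrefl order_le_less)
  thus ?thesis using x at0 t0b' after by blast
qed

lemma barrier:
  fixes f :: "real \<Rightarrow> real"
  assumes der: "\<And>s. s \<ge> a \<Longrightarrow> (f has_real_derivative f' s) (at s)"
    and fa: "c \<le> f a"
    and push: "\<And>s. s \<ge> a \<Longrightarrow> f s = c \<Longrightarrow> f' s > 0"
  shows "\<forall>s\<ge>a. c \<le> f s"
proof (intro allI impI, rule ccontr)
  fix b assume ab: "a \<le> b" and nb: "\<not> c \<le> f b"
  have cont: "continuous_on {a..b} f"
  proof (rule continuous_at_imp_continuous_on, intro ballI)
    fix x assume "x \<in> {a..b}"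
    hence "a \<le> x" by auto
    from der[OF this] show "isCont f x" by (rule DERIV_isCont)
  qed
  obtain t0 where t0: "a \<le> t0" "t0 < b" "f t0 = c" "\<forall>t. t0 < t \<and> t \<le> b \<longrightarrow> f t < c"
    using last_cross[OF cont ab fa] nb by auto
  obtain d where d: "d > 0" "\<forall>h>0. h < d \<longrightarrow> f t0 < f (t0 + h)"
    using DERIV_pos_inc_right[OF der[OF t0(1)] push[OF t0(1) t0(3)]] by blast
  define e where "e = min (d/2) ((b - t0)/2)"
  have e1: "e > 0" unfolding e_def using d t0 by simp
  have ed: "e \<le> d/2" unfolding e_def by (rule min.cobounded1)
  have eb: "e \<le> (b - t0)/2" unfolding e_def by (rule min.cobounded2)
  have e2: "e < d" using ed d(1) by linarith
  have e3: "t0 + e \<le> b" using eb \<open>t0 < b\<close> by (simp add: field_simps)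
  note e = e1 e2 e3
  have "f t0 < f (t0 + e)" using d e by auto
  moreover have "f (t0 + e) < c" using t0(4) e by auto
  ultimately show False using t0 by simp
qed

lemma barrier_up:
  fixes f :: "real \<Rightarrow> real"
  assumes der: "\<And>s. s \<ge> a \<Longrightarrow> (f has_real_derivative f' s) (at s)"
    and fa: "f a \<le> c"
    and push: "\<And>s. s \<ge> a \<Longrightarrow> f s = c \<Longrightarrow> f' s < 0"
  shows "\<forall>s\<ge>a. f s \<le> c"
proof -
  have "\<forall>s\<ge>a. -c \<le> -f s"
    by (rule barrier[where f'="\<lambda>s. - f' s"]) (use der push fa in \<open>auto intro: derivative_intros\<close>)
  thus ?thesis by auto
qed

lemma nonincr:
  fixes f :: "real \<Rightarrow> real"
  assumes "\<And>s. s \<ge> a \<Longrightarrow> (f has_real_derivative f' s) (at s)" "\<And>s. s \<ge> a \<Longrightarrow> f' s \<le> 0"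
    "a \<le> b"
  shows "f b \<le> f a"
  using assms by (intro DERIV_nonpos_imp_nonincreasing[OF assms(3)]) auto

lemma nondecr:
  fixes f :: "real \<Rightarrow> real"
  assumes "\<And>s. s \<ge> a \<Longrightarrow> (f has_real_derivative f' s) (at s)" "\<And>s. s \<ge> a \<Longrightarrow> f' s \<ge> 0"
    "a \<le> b"
  shows "f a \<le> f b"
  using assms by (intro DERIV_nonneg_imp_nondecreasing[OF assms(3)]) auto



lemma A8a: assumes "h > 0" "m \<ge> 0" "t \<ge> lam*m" "h\<^sup>2*lam \<ge> \<bar>h\<^sup>2-1\<bar>" "lam \<ge> 0"
  shows "K h t m \<ge> 0"
proof -
  have f1: "h\<^sup>2*(lam*m) \<le> h\<^sup>2*t" using assms by (intro mult_left_mono) auto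
  have f2: "\<bar>h\<^sup>2-1\<bar>*m \<le> (h\<^sup>2*lam)*m" using assms by (intro mult_right_mono) auto
  have e: "(h\<^sup>2*lam)*m = h\<^sup>2*(lam*m)" by simp
  have f3: "-((h\<^sup>2-1)*m) \<le> \<bar>h\<^sup>2-1\<bar>*m" using assms(2)
    by (smt (verit) abs_ge_self abs_minus_cancel mult_right_mono minus_mult_left)
  have f4: "0 \<le> \<bar>h\<^sup>2-1\<bar>*m" using assms(2) by simp
  have "0 \<le> 2*(h\<^sup>2*t) + (h\<^sup>2-1)*m" using f1 f2 e f3 f4 by linarith
  hence "2*h\<^sup>2*t + (h\<^sup>2-1)*m \<ge> 0" by (simp add: mult.assoc)
  hence "(1+m\<^sup>2)*(2*h\<^sup>2*t + (h\<^sup>2-1)*m) \<ge> 0" by simp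
  hence NN1: "NN h t m \<ge> 2*t^3" unfolding NN_split by linarith
  have "lam * m \<ge> 0" using assms by simp
  hence "t \<ge> 0" using assms(3) by linarith
  hence "2*t^3 \<ge> 0" by simp
  hence NN0: "NN h t m \<ge> 0" using NN1 by linarith
  show "K h t m \<ge> 0" unfolding K_eq using NN0 DD_pos[OF assms(1), of t m] by simp
qed

locale sol =
  fixes h :: real and tau mu :: "real \<Rightarrow> real"
  assumes hpos: "h > 0"
    and dtau: "\<And>s. (tau has_real_derivative (1 + K h (tau s) (mu s) * mu s)) (at s)"
    and dmu: "\<And>s. (mu has_real_derivative (- K h (tau s) (mu s) * tau s)) (at s)"
begin

definition nu where "nu s = - tau s / mu s"

definition nud where "nud s = -(mu s + K h (tau s) (mu s) * ((tau s)\<^sup>2 + (mu s)\<^sup>2)) / (mu s)\<^sup>2"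

lemma dnu: assumes "mu s \<noteq> 0" shows "(nu has_real_derivative nud s) (at s)"
proof -
  have "((\<lambda>s. - tau s / mu s) has_real_derivative
     ((-(1 + K h (tau s) (mu s) * mu s)) * mu s - (- tau s) * (- K h (tau s) (mu s) * tau s)) / (mu s * mu s)) (at s)"
    by (rule DERIV_divide[OF DERIV_minus[OF dtau] dmu assms])
  moreover have "((-(1 + K h (tau s) (mu s) * mu s)) * mu s - (- tau s) * (- K h (tau s) (mu s) * tau s)) / (mu s * mu s) = nud s"
    unfolding nud_def by (simp add: power2_eq_square algebra_simps)
  moreover have "(\<lambda>s. - tau s / mu s) = nu" unfolding nu_def by auto
  ultimately show ?thesis by simp
qed

lemma nud_sign: "mu s \<noteq> 0 \<Longrightarrow> (nud s > 0 \<longleftrightarrow> mu s + K h (tau s) (mu s) * ((tau s)\<^sup>2 + (mu s)\<^sup>2) < 0)"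
proof -
  assume "mu s \<noteq> 0"
  hence "(mu s)\<^sup>2 > 0" by simp
  thus ?thesis unfolding nud_def by (simp add: zero_less_divide_iff) (smt (verit))
qed

lemma nud_sign2: "mu s \<noteq> 0 \<Longrightarrow> (nud s < 0 \<longleftrightarrow> mu s + K h (tau s) (mu s) * ((tau s)\<^sup>2 + (mu s)\<^sup>2) > 0)"
proof -
  assume "mu s \<noteq> 0"
  hence "(mu s)\<^sup>2 > 0" by simp
  thus ?thesis unfolding nud_def by (simp add: divide_less_0_iff) (smt (verit))
qed

lemma stay_neg: assumes "mu a < 0" shows "\<forall>s\<ge>a. mu s < 0"
proof -
  define C where "C = \<bar>h\<^sup>2 - 1\<bar> / (2*h) + 1"
  define g where "g s = mu s * exp (C * s)" for s
  define g' where "g' s = (- K h (tau s) (mu s) * tau s) * exp (C * s) + mu s * (exp (C * s) * C)" for s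
  have dg: "(g has_real_derivative g' s) (at s)" for s
    unfolding g_def g'_def by (auto intro!: derivative_eq_intros dmu)
  have "\<forall>s\<ge>a. g s \<le> g a / 2"
  proof (rule barrier_up[where f'=g'])
    show "g a \<le> g a / 2" unfolding g_def using assms by (simp add: mult_neg_pos)
    fix s assume "a \<le> s" "g s = g a / 2"
    moreover have "g a < 0" unfolding g_def using assms by (simp add: mult_neg_pos)
    ultimately have gs: "g s < 0" by simp
    hence ms: "mu s < 0" unfolding g_def by (simp add: mult_less_0_iff)
    have "- K h (tau s) (mu s) * tau s \<le> \<bar>h\<^sup>2 - 1\<bar> / (2*h) * \<bar>mu s\<bar>" using grow1[OF hpos] by simp
    hence "- K h (tau s) (mu s) * tau s + mu s * C < 0" unfolding C_def using ms by (simp add: algebra_simps)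
    hence "(- K h (tau s) (mu s) * tau s + mu s * C) * exp (C * s) < 0" by (simp add: mult_neg_pos)
    thus "g' s < 0" unfolding g'_def by (simp add: algebra_simps)
  qed (rule dg)
  moreover have "g a / 2 < 0" unfolding g_def using assms by (simp add: mult_neg_pos)
  ultimately show ?thesis unfolding g_def by (smt (verit) exp_gt_zero mult_nonneg_nonneg)
qed


lemma nu_eq: "mu s \<noteq> 0 \<Longrightarrow> nu s = c \<Longrightarrow> tau s = - c * mu s"
  unfolding nu_def by (auto simp: field_simps)
lemma nu_tau: "mu s \<noteq> 0 \<Longrightarrow> tau s = - nu s * mu s"
  unfolding nu_def by simp
lemma nu_ge_neg: assumes "mu s < 0" "c \<le> nu s" shows "tau s \<ge> - c * mu s"
proof -
  have t: "tau s = - nu s * mu s" using assms(1) nu_tau by simp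
  have "(nu s - c) * mu s \<le> 0" using assms by (intro mult_nonneg_nonpos) auto
  thus ?thesis using t by (simp add: algebra_simps)
qed
lemma nu_le_neg: assumes "mu s < 0" "nu s \<le> c" shows "tau s \<le> - c * mu s"
proof -
  have t: "tau s = - nu s * mu s" using assms(1) nu_tau by simp
  have "(c - nu s) * mu s \<le> 0" using assms by (intro mult_nonneg_nonpos) auto
  thus ?thesis using t by (simp add: algebra_simps)
qed
lemma nu_le_pos: assumes "mu s > 0" "nu s \<le> c" shows "tau s \<ge> - c * mu s"
proof -
  have t: "tau s = - nu s * mu s" using assms(1) nu_tau by simp
  have "(c - nu s) * mu s \<ge> 0" using assms by (intro mult_nonneg_nonneg) auto
  thus ?thesis using t by (simp add: algebra_simps)
qed
lemma nu_ge_pos: assumes "mu s > 0" "c \<le> nu s" shows "tau s \<le> - c * mu s"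
proof -
  have t: "tau s = - nu s * mu s" using assms(1) nu_tau by simp
  have "(nu s - c) * mu s \<ge> 0" using assms by (intro mult_nonneg_nonneg) auto
  thus ?thesis using t by (simp add: algebra_simps)
qed

lemma stay_zero: assumes "\<forall>s. mu s \<ge> 0" "mu a = 0" shows "\<forall>s\<ge>a. mu s = 0"
proof (intro allI impI)
  fix b assume ab: "a \<le> b"
  define C where "C = \<bar>h\<^sup>2 - 1\<bar> / (2*h)"
  define g where "g s = mu s * exp (- (C * s))" for s
  define g' where "g' s = (- K h (tau s) (mu s) * tau s) * exp (- (C * s)) + mu s * (exp (- (C * s)) * (- C))" for s
  have dg: "(g has_real_derivative g' s) (at s)" for s
    unfolding g_def g'_def by (auto intro!: derivative_eq_intros dmu)
  have "g b \<le> g a"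
  proof (rule nonincr[where f'=g', OF dg _ ab])
    fix s
    have "- K h (tau s) (mu s) * tau s \<le> C * \<bar>mu s\<bar>" using grow1[OF hpos] unfolding C_def by simp
    hence "- K h (tau s) (mu s) * tau s - C * mu s \<le> 0" using assms(1) by simp
    hence "(- K h (tau s) (mu s) * tau s - C * mu s) * exp (- (C * s)) \<le> 0"
      by (simp add: mult_nonpos_nonneg)
    thus "g' s \<le> 0" unfolding g'_def by (simp add: algebra_simps)
  qed
  hence "mu b * exp (- (C * b)) \<le> 0" unfolding g_def using assms(2) by simp
  hence "mu b \<le> 0" by (simp add: mult_le_0_iff)
  thus "mu b = 0" using assms(1) by (meson order_antisym)
qed

lemma mu_pos: assumes "\<forall>s. mu s \<ge> 0" shows "\<forall>s. mu s > 0"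
proof (rule ccontr)
  assume "\<not> (\<forall>s. mu s > 0)"
  then obtain a where "\<not> mu a > 0" by auto
  moreover have "mu a \<ge> 0" using assms by blast
  ultimately have a0: "mu a = 0" by linarith
  have Z: "\<forall>s\<ge>a. mu s = 0" by (rule stay_zero[OF assms a0])
  have T: "tau s = 0" if "s > a" for s
  proof -
    have "- K h (tau s) (mu s) * tau s = 0"
    proof (rule DERIV_local_const[OF dmu[of s], of "s - a"])
      show "0 < s - a" using that by simp
      show "\<forall>y. \<bar>s - y\<bar> < s - a \<longrightarrow> mu s = mu y" using Z that by auto
    qed
    hence "K h (tau s) 0 * tau s = 0" using Z that by simp
    thus ?thesis using K_m0 hpos by blast
  qed
  have "1 + K h (tau (a+1)) (mu (a+1)) * mu (a+1) = 0"
  proof (rule DERIV_local_const[OF dtau[of "a+1"], of 1])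
    show "\<forall>y. \<bar>a + 1 - y\<bar> < 1 \<longrightarrow> tau (a + 1) = tau y" using T by auto
  qed simp
  thus False using Z by simp
qed

lemma fwd_from_neg: assumes "mu s1 < 0" shows "\<exists>B M. \<forall>s\<ge>B. mu s < 0 \<and> \<bar>nu s\<bar> \<le> M"
proof -
  have neg: "\<forall>s\<ge>s1. mu s < 0" by (rule stay_neg[OF assms])
  have dn: "(nu has_real_derivative nud s) (at s)" if "s \<ge> s1" for s
    using neg that dnu by auto
  have lower: "\<forall>s\<ge>b. min (nu b) (1/2) \<le> nu s" if b: "b \<ge> s1" for b
  proof (rule barrier[where f'=nud])
    show "(nu has_real_derivative nud s) (at s)" if "s \<ge> b" for s using dn that b by auto
    show "min (nu b) (1/2) \<le> nu b" by simp
    fix s assume s: "b \<le> s" "nu s = min (nu b) (1/2)"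
    have ms: "mu s < 0" using neg s b by auto
    have ts: "tau s = - min (nu b) (1/2) * mu s" using nu_eq ms s by auto
    have "(1 - 2 * min (nu b) (1/2)) * mu s \<le> 0" using ms by (intro mult_nonneg_nonpos) auto
    hence "2 * tau s + mu s \<le> 0" using ts by (simp add: algebra_simps)
    from A3[OF hpos ms this] show "nud s > 0" using nud_sign ms by auto
  qed
  define c1 where "c1 = min (nu s1) (1/2)"
  have lo: "\<forall>s\<ge>s1. c1 \<le> nu s" unfolding c1_def using lower by auto
  define a0 where "a0 = 1/2 - 1/(4*(h\<^sup>2+1))"
  have hp: "h\<^sup>2 + 1 > 0" using zero_le_power2[of h] by linarith
  have a0: "a0 > 0" "2*h\<^sup>2*a0 > h\<^sup>2 - 1" "a0 < 1/2"
  proof -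
    have q: "1/(4*(h\<^sup>2+1)) \<le> 1/4" using hp by (simp add: field_simps)
    have q2: "1/(4*(h\<^sup>2+1)) > 0" using hp by simp
    show "a0 > 0" "a0 < 1/2" unfolding a0_def using q q2 by linarith+
    have "2*h\<^sup>2*a0 = h\<^sup>2 - h\<^sup>2/(2*(h\<^sup>2+1))" unfolding a0_def using hp by (simp add: field_simps)
    moreover have "h\<^sup>2/(2*(h\<^sup>2+1)) < 1" using hp by (simp add: field_simps)
    ultimately show "2*h\<^sup>2*a0 > h\<^sup>2 - 1" by linarith
  qed
  show ?thesis
  proof (cases "\<exists>s2\<ge>s1. nu s2 \<ge> a0")
    case True
    then obtain s2 where s2: "s2 \<ge> s1" "nu s2 \<ge> a0" by auto
    define c2 where "c2 = min (nu s2) (1/2)"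
    have c2a: "c2 \<ge> a0" using s2 a0 unfolding c2_def by auto
    have lo2: "\<forall>s\<ge>s2. c2 \<le> nu s" unfolding c2_def using lower[OF s2(1)] by auto
    have mudec: "mu s \<le> mu s2" if "s \<ge> s2" for s
    proof (rule nonincr[where f'="\<lambda>s. - K h (tau s) (mu s) * tau s", OF dmu _ that])
      fix u assume u: "s2 \<le> u"
      have mu: "mu u < 0" using neg u s2 by auto
      have "a0 \<le> nu u" using lo2 u c2a by force
      hence "tau u \<ge> - a0 * mu u" using nu_ge_neg mu by blast
      from A6[OF hpos mu a0(1) a0(2) this] show "- K h (tau u) (mu u) * tau u \<le> 0" by simp
    qed
    define m0 where "m0 = - mu s2"
    have m0: "m0 > 0" unfolding m0_def using neg s2 by auto
    define b where "b = max (nu s2) (max 1 ((1+h)/m0))"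
    have b1: "b \<ge> 1" unfolding b_def by simp
    have bm: "b * m0 \<ge> 1 + h"
    proof -
      have "(1+h)/m0 \<le> b" unfolding b_def by simp
      hence "(1+h)/m0 * m0 \<le> b * m0" using m0 by (intro mult_right_mono) auto
      thus ?thesis using m0 by simp
    qed
    have hi: "\<forall>s\<ge>s2. nu s \<le> b"
    proof (rule barrier_up[where f'=nud])
      show "(nu has_real_derivative nud s) (at s)" if "s \<ge> s2" for s using dn that s2 by auto
      show "nu s2 \<le> b" unfolding b_def by simp
      fix s assume s: "s2 \<le> s" "nu s = b"
      have ms: "mu s < 0" using neg s s2 by auto
      have mle: "mu s \<le> - m0" using mudec[OF s(1)] unfolding m0_def by simp
      have "tau s = - b * mu s" using nu_eq ms s by auto
      hence "tau s \<ge> - b * mu s" by simp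
      from A4[OF hpos m0 mle b1 bm this] show "nud s < 0" using nud_sign2 ms by auto
    qed
    show ?thesis
    proof (intro exI allI impI conjI)
      fix s assume s: "s2 \<le> s"
      show "mu s < 0" using neg s s2 by auto
      have "c1 \<le> nu s" using lo s s2 by auto
      moreover have "nu s \<le> b" using hi s by auto
      ultimately show "\<bar>nu s\<bar> \<le> max \<bar>c1\<bar> \<bar>b\<bar>" by auto
    qed
  next
    case False
    hence up: "\<forall>s\<ge>s1. nu s < a0" by auto
    show ?thesis
    proof (intro exI allI impI conjI)
      fix s assume s: "s1 \<le> s"
      show "mu s < 0" using neg s by auto
      have "c1 \<le> nu s" using lo s by auto
      moreover have "nu s \<le> a0" using up s by force
      ultimately show "\<bar>nu s\<bar> \<le> max \<bar>c1\<bar> \<bar>a0\<bar>" by auto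
    qed
  qed
qed


lemma dR: "((\<lambda>s. (tau s)\<^sup>2 + (mu s)\<^sup>2) has_real_derivative 2 * tau s) (at s)"
proof -
  have "((\<lambda>s. (tau s)\<^sup>2 + (mu s)\<^sup>2) has_real_derivative
     (2 * tau s * (1 + K h (tau s) (mu s) * mu s) + 2 * mu s * (- K h (tau s) (mu s) * tau s))) (at s)"
    by (auto intro!: derivative_eq_intros dtau dmu)
  moreover have "2 * tau s * (1 + K h (tau s) (mu s) * mu s) + 2 * mu s * (- K h (tau s) (mu s) * tau s) = 2 * tau s"
    by (simp add: algebra_simps)
  ultimately show ?thesis by simp
qed

lemma caseB: assumes pos: "\<forall>s. mu s > 0" and geq: "\<forall>s. nu s \<ge> 1/2" shows False
proof -
  have tneg: "tau s \<le> - (1/2) * mu s" for s using nu_ge_pos pos geq by blast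
  have tneg': "tau s < 0" for s using tneg[of s] pos[rule_format, of s] by simp
  have mu2: "(mu s)\<^sup>2 \<le> 4 * (tau s)\<^sup>2" for s
  proof -
    have "mu s \<le> -2 * tau s" using tneg[of s] by simp
    hence "(mu s)\<^sup>2 \<le> (-2 * tau s)\<^sup>2" using pos by (intro power_mono) (auto simp: less_imp_le)
    thus ?thesis by (simp add: power_mult_distrib)
  qed
  define R where "R s = (tau s)\<^sup>2 + (mu s)\<^sup>2" for s
  have dR': "(R has_real_derivative 2 * tau s) (at s)" for s
    unfolding R_def[abs_def] by (rule dR)
  have R0: "R s \<ge> 0" for s unfolding R_def by simp
  have Rdec: "R u \<le> R s" if "s \<le> u" for s u
    by (rule nonincr[where f'="\<lambda>s. 2 * tau s", OF dR' _ that]) (use tneg' in \<open>simp add: less_imp_le\<close>)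
  define E where "E = 2 + 4*h\<^sup>2 + 2*\<bar>h\<^sup>2-1\<bar>"
  have E00: "E > 0" unfolding E_def by (smt (verit) abs_ge_zero zero_le_power2)
  have E01: "E \<ge> h\<^sup>2" unfolding E_def by (smt (verit) abs_ge_zero zero_le_power2)
  note E0 = E00 E01
  define rho where "rho = h\<^sup>2/(2*E)"
  have rho: "rho > 0" "rho \<le> 1" "E * rho \<le> h\<^sup>2/2"
  proof -
    show "rho > 0" unfolding rho_def using E0 hpos by simp
    show "rho \<le> 1" unfolding rho_def using E0 by (simp add: divide_le_eq)
    show "E * rho \<le> h\<^sup>2/2" unfolding rho_def using E0 by simp
  qed
  have near: "1 + K h (tau s) (mu s) * mu s \<ge> 1/2" if "R s \<le> rho" for s
    using A7[OF hpos _ rho(2)] that rho(3) unfolding R_def E_def by simp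
  show False
  proof (cases "\<exists>sa\<ge>0. R sa \<le> rho")
    case True
    then obtain sa where sa: "sa \<ge> 0" "R sa \<le> rho" by auto
    have tinc: "tau sa - sa/2 \<le> tau u - u/2" if "sa \<le> u" for u
    proof (rule nondecr[where f'="\<lambda>s. 1 + K h (tau s) (mu s) * mu s - 1/2", OF _ _ that])
      show "((\<lambda>u. tau u - u/2) has_real_derivative 1 + K h (tau s) (mu s) * mu s - 1/2) (at s)" for s
        by (auto intro!: derivative_eq_intros dtau)
      fix s assume "sa \<le> s"
      hence "R s \<le> rho" using Rdec sa by (meson order_trans)
      from near[OF this] show "0 \<le> 1 + K h (tau s) (mu s) * mu s - 1/2" by linarith
    qed
    define u where "u = sa + 2 * \<bar>tau sa\<bar> + 2"
    have "tau sa - sa/2 \<le> tau u - u/2" using tinc unfolding u_def by simp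
    hence "tau u \<ge> tau sa + \<bar>tau sa\<bar> + 1" unfolding u_def by (simp add: field_simps)
    moreover have "tau sa + \<bar>tau sa\<bar> \<ge> 0" by simp
    ultimately show False using tneg'[of u] by linarith
  next
    case False
    hence big: "R s > rho" if "s \<ge> 0" for s using that by (meson not_le)
    define e where "e = min 1 (rho/5)"
    have e0: "e > 0" "e \<le> 1" "e \<le> rho/5" unfolding e_def using rho by auto
    have tle: "tau s \<le> - e" if "s \<ge> 0" for s
    proof (rule ccontr)
      assume "\<not> tau s \<le> - e"
      hence a: "\<bar>tau s\<bar> < e" using tneg'[of s] by simp
      hence "\<bar>tau s\<bar> * \<bar>tau s\<bar> \<le> \<bar>tau s\<bar> * 1" using e0 by (intro mult_left_mono) auto
      hence "(tau s)\<^sup>2 < e" using a by (simp add: power2_eq_square abs_mult_self)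
      hence "5 * (tau s)\<^sup>2 < rho" using e0 by linarith
      moreover have "R s \<le> 5 * (tau s)\<^sup>2" unfolding R_def using mu2[of s] by simp
      ultimately show False using big[OF that] by linarith
    qed
    have Rlin0: "R u + 2 * e * u \<le> R 0 + 2 * e * 0" if "0 \<le> u" for u
    proof (rule nonincr[where f'="\<lambda>s. 2 * tau s + 2 * e", OF _ _ that])
      show "((\<lambda>u. R u + 2 * e * u) has_real_derivative 2 * tau s + 2 * e) (at s)" for s
        using dR'[of s] by (auto intro!: derivative_eq_intros)
      fix s :: real assume "0 \<le> s"
      thus "2 * tau s + 2 * e \<le> 0" using tle by force
    qed
    have Rlin: "R u + 2 * e * u \<le> R 0" if "0 \<le> u" for u using Rlin0[OF that] by simp
    define u where "u = R 0 / e + 1"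
    have u0: "u \<ge> 0" unfolding u_def using R0[of 0] e0 by simp
    have "2 * e * u = 2 * R 0 + 2 * e" unfolding u_def using e0 by (simp add: field_simps)
    hence "R u \<le> - R 0 - 2 * e" using Rlin[OF u0] by linarith
    thus False using R0[of u] R0[of 0] e0 by linarith
  qed
qed


lemma caseA: assumes pos: "\<forall>s. mu s > 0" and s2: "nu s2 < 1/2" shows False
proof -
  have dn: "(nu has_real_derivative nud s) (at s)" for s using dnu pos by (metis less_irrefl)
  have mpos: "mu s > 0" for s using pos by blast
  define c0 where "c0 = nu s2"
  define del where "del = 1 - 2*c0"
  have del0: "del > 0" unfolding del_def c0_def using s2 by simp
  define gam where "gam = min (del * min 1 (h\<^sup>2)) (h\<^sup>2/(1+h\<^sup>2))"
  have hp1: "1 + h\<^sup>2 > 0" using zero_le_power2[of h] by linarith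
  have gam0: "gam > 0" unfolding gam_def using del0 hpos hp1 by simp
  have keyA: "mu s + K h (tau s) (mu s) * ((tau s)\<^sup>2 + (mu s)\<^sup>2) \<ge> gam * mu s" if "nu s \<le> c0" for s
  proof -
    have "tau s \<ge> - c0 * mu s" using nu_le_pos mpos that by blast
    hence "2 * tau s + mu s \<ge> del * mu s" unfolding del_def by (simp add: algebra_simps)
    from A5[OF hpos mpos[of s] del0 this] show ?thesis unfolding gam_def .
  qed
  have up: "\<forall>s\<ge>s2. nu s \<le> c0"
  proof (rule barrier_up[where f'=nud])
    show "(nu has_real_derivative nud s) (at s)" for s by (rule dn)
    show "nu s2 \<le> c0" unfolding c0_def by simp
    fix s assume s: "s2 \<le> s" "nu s = c0"
    have "gam * mu s > 0" using gam0 mpos by simp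
    moreover have "mu s + K h (tau s) (mu s) * ((tau s)\<^sup>2 + (mu s)\<^sup>2) \<ge> gam * mu s" using keyA s by simp
    ultimately have "mu s + K h (tau s) (mu s) * ((tau s)\<^sup>2 + (mu s)\<^sup>2) > 0" by linarith
    thus "nud s < 0" using nud_sign2 mpos by (metis less_irrefl)
  qed
  have rate: "nud s \<le> - gam / mu s" if "s \<ge> s2" for s
  proof -
    have X: "mu s + K h (tau s) (mu s) * ((tau s)\<^sup>2 + (mu s)\<^sup>2) \<ge> gam * mu s" using keyA up that by auto
    have mp: "(mu s)\<^sup>2 > 0" using mpos[of s] by simp
    have "nud s = -(mu s + K h (tau s) (mu s) * ((tau s)\<^sup>2 + (mu s)\<^sup>2))/(mu s)\<^sup>2" unfolding nud_def ..
    also have "\<dots> \<le> -(gam * mu s)/(mu s)\<^sup>2" using X mp by (intro divide_right_mono) auto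
    also have "\<dots> = - gam / mu s" using mpos[of s] by (simp add: power2_eq_square)
    finally show ?thesis .
  qed
  have rate_neg: "nud s \<le> 0" if "s \<ge> s2" for s
  proof -
    have "gam / mu s > 0" using gam0 mpos[of s] by simp
    thus ?thesis using rate[OF that] by linarith
  qed
  define lam where "lam = max 1 (\<bar>h\<^sup>2-1\<bar>/h\<^sup>2)"
  have lam1: "lam \<ge> 1" "lam \<ge> 0" unfolding lam_def by auto
  have lam2: "h\<^sup>2 * lam \<ge> \<bar>h\<^sup>2-1\<bar>"
  proof -
    have "h\<^sup>2 * (\<bar>h\<^sup>2-1\<bar>/h\<^sup>2) \<le> h\<^sup>2 * lam" unfolding lam_def by (intro mult_left_mono) auto
    thus ?thesis using hpos by simp
  qed
  show False
  proof (cases "\<exists>s3\<ge>s2. nu s3 \<le> -lam")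
    case True
    then obtain s3 where s3: "s3 \<ge> s2" "nu s3 \<le> -lam" by auto
    have nule: "nu u \<le> -lam" if "u \<ge> s3" for u
    proof -
      have "nu u \<le> nu s3"
      proof (rule nonincr[where f'=nud, OF dn _ that])
        fix s :: real assume "s3 \<le> s" thus "nud s \<le> 0" using rate_neg s3 by force
      qed
      thus ?thesis using s3 by simp
    qed
    have tl: "tau u \<ge> lam * mu u" if "u \<ge> s3" for u using nu_le_pos[OF mpos nule[OF that]] by simp
    have Kp: "K h (tau u) (mu u) \<ge> 0" if "u \<ge> s3" for u
      using A8a[OF hpos _ tl[OF that] lam2 lam1(2)] mpos[of u] by simp
    have tinc: "tau s3 - s3 \<le> tau u - u" if "s3 \<le> u" for u
    proof (rule nondecr[where f'="\<lambda>s. 1 + K h (tau s) (mu s) * mu s - 1", OF _ _ that])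
      show "((\<lambda>u. tau u - u) has_real_derivative 1 + K h (tau s) (mu s) * mu s - 1) (at s)" for s
        by (auto intro!: derivative_eq_intros dtau)
      fix s :: real assume "s3 \<le> s"
      hence "K h (tau s) (mu s) * mu s \<ge> 0" using Kp mpos[of s] by (simp add: less_imp_le)
      thus "0 \<le> 1 + K h (tau s) (mu s) * mu s - 1" by simp
    qed
    define s4 where "s4 = s3 + \<bar>tau s3\<bar> + 1"
    have s34: "s3 \<le> s4" unfolding s4_def by simp
    have t1: "tau u \<ge> 1" if "u \<ge> s4" for u
    proof -
      have "tau s3 - s3 \<le> tau u - u" using tinc s34 that by simp
      moreover have "tau s3 + \<bar>tau s3\<bar> \<ge> 0" by simp
      ultimately show ?thesis using that unfolding s4_def by linarith
    qed
    define kap where "kap = 2/(3*(h\<^sup>2+2))"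
    have kap0: "kap > 0" unfolding kap_def using zero_le_power2[of h] by (simp add: add_nonneg_pos)
    have mdec: "mu u + kap * u \<le> mu s4 + kap * s4" if "s4 \<le> u" for u
    proof (rule nonincr[where f'="\<lambda>s. - K h (tau s) (mu s) * tau s + kap", OF _ _ that])
      show "((\<lambda>u. mu u + kap * u) has_real_derivative - K h (tau s) (mu s) * tau s + kap) (at s)" for s
        by (auto intro!: derivative_eq_intros dmu)
      fix s :: real assume s: "s4 \<le> s"
      have "K h (tau s) (mu s) * tau s \<ge> kap" unfolding kap_def
        using A8(2)[OF hpos _ tl lam1(1) lam2 t1[OF s]] mpos[of s] s s34 by (simp add: less_imp_le)
      thus "- K h (tau s) (mu s) * tau s + kap \<le> 0" by simp
    qed
    define u where "u = s4 + mu s4 / kap + 1"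
    have us: "s4 \<le> u" unfolding u_def using mpos[of s4] kap0 by simp
    have "kap * u = kap * s4 + mu s4 + kap" unfolding u_def using kap0 by (simp add: field_simps)
    hence "mu u \<le> - kap" using mdec[OF us] by linarith
    thus False using mpos[of u] kap0 by linarith
  next
    case False
    hence gt: "nu s > -lam" if "s \<ge> s2" for s using that by (meson not_le)
    define M1 where "M1 = \<bar>h\<^sup>2-1\<bar>/2 + 1"
    have M1: "M1 > 0" unfolding M1_def by (rule add_nonneg_pos) auto
    have M1b: "\<bar>h\<^sup>2-1\<bar>/2 \<le> M1" unfolding M1_def by simp
    have bnd: "- K h (tau s) (mu s) * tau s \<le> M1" for s
      using order_trans[OF grow2[OF hpos, of "tau s" "mu s"] M1b] by simp
    define F where "F s = nu s + (gam/M1) * ln (mu s)" for s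
    have dF: "(F has_real_derivative nud s + (gam/M1) * (1 / mu s * (- K h (tau s) (mu s) * tau s))) (at s)" for s
    proof -
      have "((\<lambda>s. ln (mu s)) has_real_derivative (1 / mu s) * (- K h (tau s) (mu s) * tau s)) (at s)"
        by (rule DERIV_chain2[OF DERIV_ln_divide[OF mpos] dmu])
      from DERIV_add[OF dn DERIV_cmult[OF this, of "gam/M1"]] show ?thesis unfolding F_def[abs_def] .
    qed
    have Fdec: "F u \<le> F s2" if "s2 \<le> u" for u
    proof (rule nonincr[OF dF _ that])
      fix s :: real assume s: "s2 \<le> s"
      have a: "nud s \<le> - gam / mu s" by (rule rate[OF s])
      have "(- K h (tau s) (mu s) * tau s) / mu s \<le> M1 / mu s"
        using bnd mpos[of s] by (intro divide_right_mono) (auto simp: less_imp_le)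
      hence "(gam/M1) * ((- K h (tau s) (mu s) * tau s) / mu s) \<le> (gam/M1) * (M1 / mu s)"
        using gam0 M1 by (intro mult_left_mono) auto
      also have "(gam/M1) * (M1 / mu s) = gam / mu s" using M1 by simp
      finally have b: "(gam/M1) * ((- K h (tau s) (mu s) * tau s) / mu s) \<le> gam / mu s" .
      have "(gam/M1) * (1 / mu s * (- K h (tau s) (mu s) * tau s)) = (gam/M1) * ((- K h (tau s) (mu s) * tau s) / mu s)"
        by simp
      thus "nud s + (gam/M1) * (1 / mu s * (- K h (tau s) (mu s) * tau s)) \<le> 0" using a b by simp
    qed
    define L where "L = (F s2 + lam) * M1 / gam"
    have mub: "mu u \<le> exp L" if "s2 \<le> u" for u
    proof -
      have "(gam/M1) * ln (mu u) \<le> F s2 - nu u" using Fdec[OF that] unfolding F_def by simp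
      also have "\<dots> < F s2 + lam" using gt[OF that] by simp
      finally have "(gam/M1) * ln (mu u) < F s2 + lam" .
      hence "ln (mu u) < L" unfolding L_def using gam0 M1 by (simp add: field_simps)
      hence "exp (ln (mu u)) \<le> exp L" by simp
      thus ?thesis using mpos[of u] by simp
    qed
    define Mu where "Mu = exp L"
    have Mu0: "Mu > 0" unfolding Mu_def by simp
    have nudec: "nu u + (gam/Mu) * u \<le> nu s2 + (gam/Mu) * s2" if "s2 \<le> u" for u
    proof (rule nonincr[where f'="\<lambda>s. nud s + gam/Mu", OF _ _ that])
      show "((\<lambda>u. nu u + (gam/Mu) * u) has_real_derivative nud s + gam/Mu) (at s)" for s
        using dn[of s] Mu0 by (auto intro!: derivative_eq_intros)
      fix s :: real assume s: "s2 \<le> s"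
      have "gam / Mu \<le> gam / mu s" using mub[OF s] mpos[of s] gam0 unfolding Mu_def
        by (intro divide_left_mono) auto
      thus "nud s + gam/Mu \<le> 0" using rate[OF s] by simp
    qed
    have lpos: "nu s2 + lam > 0" using gt[of s2] by simp
    define u where "u = s2 + (nu s2 + lam) * Mu / gam + 1"
    have us: "s2 \<le> u" unfolding u_def using lpos Mu0 gam0 by simp
    have "(gam/Mu) * u = (gam/Mu) * s2 + (nu s2 + lam) + gam/Mu" unfolding u_def using Mu0 gam0
      by (simp add: field_simps)
    hence "nu u \<le> - lam - gam/Mu" using nudec[OF us] by linarith
    moreover have "gam/Mu > 0" using Mu0 gam0 by simp
    ultimately show False using gt[OF us] by linarith
  qed
qed

lemma exists_neg: "\<exists>s. mu s < 0"
proof (rule ccontr)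
  assume "\<not> ?thesis"
  hence nn: "\<forall>s. mu s \<ge> 0" by (auto simp: not_less)
  have pos: "\<forall>s. mu s > 0" by (rule mu_pos[OF nn])
  show False
  proof (cases "\<exists>s2. nu s2 < 1/2")
    case True then obtain s2 where "nu s2 < 1/2" by auto
    thus False by (rule caseA[OF pos])
  next
    case False hence "\<forall>s. nu s \<ge> 1/2" by (auto simp: not_less)
    thus False by (rule caseB[OF pos])
  qed
qed

lemma forward: "\<exists>B M. \<forall>s\<ge>B. mu s < 0 \<and> \<bar>nu s\<bar> \<le> M"
  using exists_neg fwd_from_neg by blast

end

theorem claim7:
  fixes h :: real and \<tau> \<mu> :: "real \<Rightarrow> real"
  assumes "h > 0"
    and "\<And>s. (\<tau> has_real_derivative (1 + K h (\<tau> s) (\<mu> s) * \<mu> s)) (at s)"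
    and "\<And>s. (\<mu> has_real_derivative (- K h (\<tau> s) (\<mu> s) * \<tau> s)) (at s)"
  shows "\<exists>A B. A \<le> B \<and> (\<forall>s. s \<notin> {A..B} \<longrightarrow> \<mu> s \<noteq> 0) \<and>
           bounded ((\<lambda>s. - \<tau> s / \<mu> s) ` (- {A..B}))"
proof -
  interpret S1: sol h \<tau> \<mu> using assms by unfold_locales auto
  obtain B1 M1 where f1: "\<forall>s\<ge>B1. \<mu> s < 0 \<and> \<bar>S1.nu s\<bar> \<le> M1" using S1.forward by blast
  define sg where "sg = (\<lambda>s. - \<tau> (- s))"
  define mm where "mm = (\<lambda>s. - \<mu> (- s))"
  have dsg: "(sg has_real_derivative (1 + K h (sg s) (mm s) * mm s)) (at s)" for s
  proof -
    have "((\<lambda>s. \<tau> (- s)) has_real_derivative (1 + K h (\<tau> (-s)) (\<mu> (-s)) * \<mu> (-s)) * (-1)) (at s)"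
      by (rule DERIV_chain2[OF assms(2) DERIV_minus[OF DERIV_ident]])
    hence "(sg has_real_derivative - ((1 + K h (\<tau> (-s)) (\<mu> (-s)) * \<mu> (-s)) * (-1))) (at s)"
      unfolding sg_def by (rule DERIV_minus)
    moreover have "- ((1 + K h (\<tau> (-s)) (\<mu> (-s)) * \<mu> (-s)) * (-1)) = 1 + K h (sg s) (mm s) * mm s"
      unfolding sg_def mm_def by (simp add: K_neg)
    ultimately show ?thesis by metis
  qed
  have dmm: "(mm has_real_derivative (- K h (sg s) (mm s) * sg s)) (at s)" for s
  proof -
    have "((\<lambda>s. \<mu> (- s)) has_real_derivative (- K h (\<tau> (-s)) (\<mu> (-s)) * \<tau> (-s)) * (-1)) (at s)"
      by (rule DERIV_chain2[OF assms(3) DERIV_minus[OF DERIV_ident]])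
    hence "(mm has_real_derivative - ((- K h (\<tau> (-s)) (\<mu> (-s)) * \<tau> (-s)) * (-1))) (at s)"
      unfolding mm_def by (rule DERIV_minus)
    moreover have "- ((- K h (\<tau> (-s)) (\<mu> (-s)) * \<tau> (-s)) * (-1)) = - K h (sg s) (mm s) * sg s"
      unfolding sg_def mm_def by (simp add: K_neg)
    ultimately show ?thesis by simp
  qed
  interpret S2: sol h sg mm using assms(1) dsg dmm by unfold_locales auto
  obtain B2 M2 where f2: "\<forall>s\<ge>B2. mm s < 0 \<and> \<bar>S2.nu s\<bar> \<le> M2" using S2.forward by blast
  have nu2: "S2.nu u = - \<tau> (-u) / \<mu> (-u)" for u
  proof -
    have "S2.nu u = - sg u / mm u" by (rule S2.nu_def)
    also have "\<dots> = - \<tau> (-u) / \<mu> (-u)" unfolding sg_def mm_def by simp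
    finally show ?thesis .
  qed
  show ?thesis
  proof (intro exI conjI)
    show "min (- B2) B1 \<le> max (- B2) B1" by simp
    show "\<forall>s. s \<notin> {min (- B2) B1..max (- B2) B1} \<longrightarrow> \<mu> s \<noteq> 0"
    proof (intro allI impI)
      fix s assume "s \<notin> {min (- B2) B1..max (- B2) B1}"
      hence "s < min (- B2) B1 \<or> s > max (- B2) B1" by auto
      thus "\<mu> s \<noteq> 0"
      proof
        assume "s < min (- B2) B1"
        hence "- s \<ge> B2" by simp
        hence "mm (- s) < 0" using f2 by blast
        thus ?thesis unfolding mm_def by simp
      next
        assume "s > max (- B2) B1"
        hence "s \<ge> B1" by simp
        thus ?thesis using f1 by force
      qed
    qed
    show "bounded ((\<lambda>s. - \<tau> s / \<mu> s) ` (- {min (- B2) B1..max (- B2) B1}))"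
      unfolding bounded_iff
    proof (intro exI ballI)
      fix x assume "x \<in> (\<lambda>s. - \<tau> s / \<mu> s) ` (- {min (- B2) B1..max (- B2) B1})"
      then obtain s where s: "s \<notin> {min (- B2) B1..max (- B2) B1}" and x: "x = - \<tau> s / \<mu> s" by auto
      from s have "s < min (- B2) B1 \<or> s > max (- B2) B1" by auto
      thus "norm x \<le> max M1 M2"
      proof
        assume "s < min (- B2) B1"
        hence "- s \<ge> B2" by simp
        hence "\<bar>S2.nu (- s)\<bar> \<le> M2" using f2 by blast
        hence "\<bar>- \<tau> s / \<mu> s\<bar> \<le> M2" using nu2[of "- s"] by simp
        thus ?thesis using x by simp
      next
        assume "s > max (- B2) B1"
        hence "s \<ge> B1" by simp
        hence "\<bar>S1.nu s\<bar> \<le> M1" using f1 by blast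
        hence "\<bar>- \<tau> s / \<mu> s\<bar> \<le> M1" unfolding S1.nu_def by simp
        thus ?thesis using x by simp
      qed
    qed
  qed
qed

end
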